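(* In a search game (as defined in the context), $U_{\mathrm{opt}}=\max_{f\in F_C}\sum_{\omega\in\Omega}f(\omega)\mu(\omega)v_{\mathfrak{s}}(\omega)=\max_{f\in F_F}\sum_{\omega\in\Omega}f(\omega)\mu(\omega)v_{\mathfrak{s}}(\omega)$, where $F_C$ is the set of compatible mixed outcomes and $F_F$ is the set of mixed outcomes generated by fractional allocations.
   Context: A search game has a finite set of players $N=\{1,\ldots,n\}$, a finite set $\Omega$ of locations, for each player $i$ a partition $\Pi_i$ of $\Omega$ (with $\pi_i(\omega)$ the cell containing $\omega$), a capacity $K_i\in\mathbb{N}$, a prior $\mu\in\Delta(\Omega)$, and social values $v_{\mathfrak{s}}(\omega)\ge0$ (other ingredients are irrelevant here). A pure strategy $s_i$ assigns to each cell $\pi_i\in\Pi_i$ a subset $s_i(\pi_i)\subseteq\pi_i$ with at most $K_i$ elements; $S$ is the set of pure profiles, and $m_s(\omega)=\sum_{i\in N}\mathbf{1}_{\omega\in s_i(\pi_i(\omega))}$. The social payoff is $U(s)=\sum_{\omega}\mu(\omega)v_{\mathfrak{s}}(\omega)\mathbf{1}_{m_s(\omega)\ge1}$ and $U_{\mathrm{opt}}=\max_{s\in S}U(s)$. A mixed outcome is a function $f:\Omega\to[0,1]$; it is compatible if for every $W\subseteq\Omega$: $\sum_{\omega\in W}f(\omega)\le\sum_{i\in N}K_i\cdot|\{\pi_i\in\Pi_i:\pi_i\cap W\ne\emptyset\}|$. A fractional allocation $\alpha=(\alpha_1,\ldots,\alpha_n)$ specifies $\alpha_i(\pi_i,\omega)\ge0$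 for every player $i$, cell $\pi_i\in\Pi_i$ and $\omega\in\pi_i$, with $\sum_{\omega\in\pi_i}\alpha_i(\pi_i,\omega)\le K_i$ for every cell; it generates $f_\alpha(\omega)=\min\big(1,\sum_{i\in N}\alpha_i(\pi_i(\omega),\omega)\big)$. *)

theory Defs
  imports Complex_Main "HOL-Library.Disjoint_Sets"
begin

definition cell :: "'w set set \<Rightarrow> 'w \<Rightarrow> 'w set" where
  "cell Q w = (THE c. c \<in> Q \<and> w \<in> c)"

definition search_game ::
  "'i set \<Rightarrow> 'w set \<Rightarrow> ('i \<Rightarrow> 'w set set) \<Rightarrow> ('i \<Rightarrow> nat) \<Rightarrow> ('w \<Rightarrow> real) \<Rightarrow> ('w \<Rightarrow> real) \<Rightarrow> bool"
  where
  "search_game N Omega P K mu v \<longleftrightarrow>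
     finite N \<and> finite Omega \<and> (\<forall>i\<in>N. partition_on Omega (P i)) \<and>
     (\<forall>w\<in>Omega. 0 \<le> mu w) \<and> sum mu Omega = 1 \<and> (\<forall>w\<in>Omega. 0 \<le> v w)"

text \<open>Pure strategy profile: s i c is the subset searched by player i in cell c.\<close>
definition pure_profile ::
  "'i set \<Rightarrow> ('i \<Rightarrow> 'w set set) \<Rightarrow> ('i \<Rightarrow> nat) \<Rightarrow> ('i \<Rightarrow> 'w set \<Rightarrow> 'w set) \<Rightarrow> bool" where
  "pure_profile N P K s \<longleftrightarrow> (\<forall>i\<in>N. \<forall>c\<in>P i. s i c \<subseteq> c \<and> card (s i c) \<le> K i)"

definition m_s :: "'i set \<Rightarrow> ('i \<Rightarrow> 'w set set) \<Rightarrow> ('i \<Rightarrow> 'w set \<Rightarrow> 'w set) \<Rightarrow> 'w \<Rightarrow> nat" where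
  "m_s N P s w = card {i\<in>N. w \<in> s i (cell (P i) w)}"

definition social_payoff ::
  "'i set \<Rightarrow> 'w set \<Rightarrow> ('i \<Rightarrow> 'w set set) \<Rightarrow> ('w \<Rightarrow> real) \<Rightarrow> ('w \<Rightarrow> real) \<Rightarrow> ('i \<Rightarrow> 'w set \<Rightarrow> 'w set) \<Rightarrow> real" where
  "social_payoff N Omega P mu v s = (\<Sum>w\<in>Omega. mu w * v w * (if 1 \<le> m_s N P s w then 1 else 0))"

definition U_opt ::
  "'i set \<Rightarrow> 'w set \<Rightarrow> ('i \<Rightarrow> 'w set set) \<Rightarrow> ('i \<Rightarrow> nat) \<Rightarrow> ('w \<Rightarrow> real) \<Rightarrow> ('w \<Rightarrow> real) \<Rightarrow> real" where
  "U_opt N Omega P K mu v = Max {social_payoff N Omega P mu v s | s. pure_profile N P K s}"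

definition mixed_outcome :: "'w set \<Rightarrow> ('w \<Rightarrow> real) \<Rightarrow> bool" where
  "mixed_outcome Omega f \<longleftrightarrow> (\<forall>w\<in>Omega. 0 \<le> f w \<and> f w \<le> 1)"

definition compatible ::
  "'i set \<Rightarrow> 'w set \<Rightarrow> ('i \<Rightarrow> 'w set set) \<Rightarrow> ('i \<Rightarrow> nat) \<Rightarrow> ('w \<Rightarrow> real) \<Rightarrow> bool" where
  "compatible N Omega P K f \<longleftrightarrow> mixed_outcome Omega f \<and>
     (\<forall>W. W \<subseteq> Omega \<longrightarrow>
        sum f W \<le> (\<Sum>i\<in>N. real (K i) * real (card {c\<in>P i. c \<inter> W \<noteq> {}})))"

definition frac_alloc ::
  "'i set \<Rightarrow> ('i \<Rightarrow> 'w set set) \<Rightarrow> ('i \<Rightarrow> nat) \<Rightarrow> ('i \<Rightarrow> 'w set \<Rightarrow> 'w \<Rightarrow> real) \<Rightarrow> bool" where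
  "frac_alloc N P K alpha \<longleftrightarrow>
     (\<forall>i\<in>N. \<forall>c\<in>P i. (\<forall>w\<in>c. 0 \<le> alpha i c w) \<and> (\<Sum>w\<in>c. alpha i c w) \<le> real (K i))"

definition f_alpha ::
  "'i set \<Rightarrow> ('i \<Rightarrow> 'w set set) \<Rightarrow> ('i \<Rightarrow> 'w set \<Rightarrow> 'w \<Rightarrow> real) \<Rightarrow> 'w \<Rightarrow> real" where
  "f_alpha N P alpha w = min 1 (\<Sum>i\<in>N. alpha i (cell (P i) w) w)"

definition F_C ::
  "'i set \<Rightarrow> 'w set \<Rightarrow> ('i \<Rightarrow> 'w set set) \<Rightarrow> ('i \<Rightarrow> nat) \<Rightarrow> ('w \<Rightarrow> real) set" where
  "F_C N Omega P K = {f. compatible N Omega P K f}"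

definition F_F ::
  "'i set \<Rightarrow> ('i \<Rightarrow> 'w set set) \<Rightarrow> ('i \<Rightarrow> nat) \<Rightarrow> ('w \<Rightarrow> real) set" where
  "F_F N P K = {f_alpha N P alpha | alpha. frac_alloc N P K alpha}"

definition outcome_value :: "'w set \<Rightarrow> ('w \<Rightarrow> real) \<Rightarrow> ('w \<Rightarrow> real) \<Rightarrow> ('w \<Rightarrow> real) \<Rightarrow> real" where
  "outcome_value Omega mu v f = (\<Sum>w\<in>Omega. f w * mu w * v w)"

definition is_max_over :: "'a set \<Rightarrow> ('a \<Rightarrow> real) \<Rightarrow> real \<Rightarrow> bool" where
  "is_max_over A g x \<longleftrightarrow> (\<exists>a\<in>A. g a = x) \<and> (\<forall>a\<in>A. g a \<le> x)"

end

theory Submission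
  imports Defs
begin
definition matchable :: "'c set \<Rightarrow> ('c \<Rightarrow> 'w set) \<Rightarrow> ('c \<Rightarrow> nat) \<Rightarrow> 'w set \<Rightarrow> bool" where
  "matchable C A k X \<longleftrightarrow> (\<exists>\<sigma>. (\<forall>x\<in>X. \<sigma> x \<in> C \<and> x \<in> A (\<sigma> x)) \<and> (\<forall>c\<in>C. card {x\<in>X. \<sigma> x = c} \<le> k c))"

definition rho :: "'c set \<Rightarrow> ('c \<Rightarrow> 'w set) \<Rightarrow> ('c \<Rightarrow> nat) \<Rightarrow> 'w set \<Rightarrow> nat" where
  "rho C A k Z = (\<Sum>c\<in>{c\<in>C. A c \<inter> Z \<noteq> {}}. k c)"

lemma hall_aux:
  assumes "finite X" "finite C" "X \<inter> U = {}"
    "\<forall>x\<in>X. \<sigma> x \<in> C \<and> x \<in> A (\<sigma> x)" "\<forall>c\<in>C. card {x\<in>X. \<sigma> x = c} \<le> k c"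
    "\<forall>u\<in>U. \<not> matchable C A k (insert u X)"
  shows "\<exists>Z. U \<subseteq> Z \<and> Z \<subseteq> X \<union> U \<and> rho C A k Z \<le> card (X \<inter> Z)"
  using assms
proof (induction "card X" arbitrary: X U C \<sigma> rule: less_induct)
  case less
  note fX = less.prems(1) and fC = less.prems(2) and disj = less.prems(3)
    and sg = less.prems(4) and cap = less.prems(5) and nm = less.prems(6)
  define C0 where "C0 = {c\<in>C. A c \<inter> U \<noteq> {}}"
  have full: "card {x\<in>X. \<sigma> x = c} = k c" if "c \<in> C0" for c
  proof (rule ccontr)
    assume ne: "card {x\<in>X. \<sigma> x = c} \<noteq> k c"
    from that obtain u where u: "u \<in> U" "u \<in> A c" "c \<in> C" unfolding C0_def by auto
    have uX: "u \<notin> X" using disj u by auto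
    have "matchable C A k (insert u X)"
      unfolding matchable_def
    proof (rule exI[of _ "\<sigma>(u := c)"], rule conjI; intro ballI)
      fix x assume "x \<in> insert u X" then show "(\<sigma>(u := c)) x \<in> C \<and> x \<in> A ((\<sigma>(u := c)) x)"
        using sg u by auto
    next
      fix c' assume c': "c' \<in> C"
      show "card {x \<in> insert u X. (\<sigma>(u := c)) x = c'} \<le> k c'"
      proof (cases "c' = c")
        case True
        have "{x \<in> insert u X. (\<sigma>(u := c)) x = c'} = insert u {x\<in>X. \<sigma> x = c}"
          using True uX by auto
        moreover have "card {x\<in>X. \<sigma> x = c} < k c" using cap ne u(3) by (meson le_neq_implies_less)
        ultimately show ?thesis using True uX fX by simp
      next
        case False
        have "{x \<in> insert u X. (\<sigma>(u := c)) x = c'} = {x\<in>X. \<sigma> x = c'}"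
          using False uX by auto
        then show ?thesis using cap c' by simp
      qed
    qed
    then show False using nm u by auto
  qed
  define X1 where "X1 = {x\<in>X. \<sigma> x \<in> C0}"
  have fC0: "finite C0" using fC unfolding C0_def by auto
  have cardX1: "card X1 = (\<Sum>c\<in>C0. k c)"
  proof -
    have "card X1 = (\<Sum>c\<in>C0. card {x\<in>X1. \<sigma> x = c})"
      using sum.group[of X1 C0 \<sigma> "\<lambda>_. 1::nat"] fX fC0 unfolding X1_def by force
    also have "\<dots> = (\<Sum>c\<in>C0. k c)"
    proof (rule sum.cong[OF refl])
      fix c assume c: "c \<in> C0"
      have "{x\<in>X1. \<sigma> x = c} = {x\<in>X. \<sigma> x = c}" using c unfolding X1_def by auto
      then show "card {x\<in>X1. \<sigma> x = c} = k c" using full[OF c] by simp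
    qed
    finally show ?thesis .
  qed
  have rhoU: "rho C A k U = (\<Sum>c\<in>C0. k c)" unfolding rho_def C0_def by simp
  show ?case
  proof (cases "X1 = {}")
    case True
    then have "rho C A k U = 0" using cardX1 rhoU by simp
    then show ?thesis by (intro exI[of _ U]) auto
  next
    case False
    define X' where "X' = X - X1"
    define C' where "C' = C - C0"
    have X1X: "X1 \<subseteq> X" unfolding X1_def by auto
    have lt: "card X' < card X" unfolding X'_def
      by (rule psubset_card_mono) (use fX False X1X in auto)
    have "\<exists>Z. X1 \<subseteq> Z \<and> Z \<subseteq> X' \<union> X1 \<and> rho C' A k Z \<le> card (X' \<inter> Z)"
    proof (rule less.hyps[OF lt])
      show "finite X'" using fX unfolding X'_def by auto
      show "finite C'" using fC unfolding C'_def by auto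
      show "X' \<inter> X1 = {}" unfolding X'_def by auto
      show "\<forall>x\<in>X'. \<sigma> x \<in> C' \<and> x \<in> A (\<sigma> x)" using sg unfolding X'_def C'_def X1_def by auto
      show "\<forall>c\<in>C'. card {x\<in>X'. \<sigma> x = c} \<le> k c"
      proof
        fix c assume c: "c \<in> C'"
        have "{x\<in>X'. \<sigma> x = c} = {x\<in>X. \<sigma> x = c}" using c unfolding X'_def C'_def X1_def by auto
        then show "card {x\<in>X'. \<sigma> x = c} \<le> k c" using cap c unfolding C'_def by auto
      qed
      show "\<forall>y\<in>X1. \<not> matchable C' A k (insert y X')"
      proof (intro ballI notI)
        fix y assume y: "y \<in> X1" and "matchable C' A k (insert y X')"
        then obtain \<sigma>' where s1: "\<forall>x\<in>insert y X'. \<sigma>' x \<in> C' \<and> x \<in> A (\<sigma>' x)"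
          and s2: "\<forall>c\<in>C'. card {x\<in>insert y X'. \<sigma>' x = c} \<le> k c"
          unfolding matchable_def by blast
        have yC0: "\<sigma> y \<in> C0" using y unfolding X1_def by auto
        then obtain u where u: "u \<in> U" "u \<in> A (\<sigma> y)" "\<sigma> y \<in> C" unfolding C0_def by auto
        have uX: "u \<notin> X" using disj u by auto
        define \<tau> where "\<tau> x = (if x = u then \<sigma> y else if x \<in> X1 - {y} then \<sigma> x else \<sigma>' x)" for x
        have "matchable C A k (insert u X)"
          unfolding matchable_def
        proof (rule exI[of _ \<tau>], rule conjI; intro ballI)
          fix x assume x: "x \<in> insert u X"
          show "\<tau> x \<in> C \<and> x \<in> A (\<tau> x)"
          proof (cases "x = u")
            case True then show ?thesis using u by (simp add: \<tau>_def)
          next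
            case False
            show ?thesis
            proof (cases "x \<in> X1 - {y}")
              case True then show ?thesis using False sg X1X by (auto simp: \<tau>_def)
            next
              case F2: False
              then have "x \<in> insert y X'" using x False unfolding X'_def by auto
              then show ?thesis using s1 False F2 unfolding \<tau>_def C'_def by auto
            qed
          qed
        next
          fix c assume c: "c \<in> C"
          show "card {x \<in> insert u X. \<tau> x = c} \<le> k c"
          proof (cases "c \<in> C0")
            case True
            show ?thesis
            proof (cases "\<sigma> y = c")
              case True
              have sub: "{x \<in> insert u X. \<tau> x = c} \<subseteq> insert u ({x\<in>X. \<sigma> x = c} - {y})"
              proof
                fix x assume x: "x \<in> {x \<in> insert u X. \<tau> x = c}"
                show "x \<in> insert u ({x\<in>X. \<sigma> x = c} - {y})"
                proof (cases "x = u \<or> x \<in> X1 - {y}")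
                  case True then show ?thesis using x X1X by (auto simp: \<tau>_def)
                next
                  case False
                  then have "x \<in> insert y X'" using x unfolding X'_def by auto
                  then have "\<tau> x \<in> C'" using s1 False by (auto simp: \<tau>_def)
                  then show ?thesis using x \<open>c \<in> C0\<close> unfolding C'_def by auto
                qed
              qed
              have yin: "y \<in> {x\<in>X. \<sigma> x = c}" using y True X1X by auto
              have fin: "finite {x\<in>X. \<sigma> x = c}" using fX by auto
              have "card {x \<in> insert u X. \<tau> x = c} \<le> card (insert u ({x\<in>X. \<sigma> x = c} - {y}))"
                by (rule card_mono) (use fin sub in auto)
              also have "\<dots> \<le> Suc (card ({x\<in>X. \<sigma> x = c} - {y}))" using fin by (simp add: card_insert_if)
              also have "\<dots> = card {x\<in>X. \<sigma> x = c}" using card.remove[OF fin yin] by simp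
              also have "\<dots> \<le> k c" using cap c by auto
              finally show ?thesis .
            next
              case False
              have sub: "{x \<in> insert u X. \<tau> x = c} \<subseteq> {x\<in>X. \<sigma> x = c}"
              proof
                fix x assume x: "x \<in> {x \<in> insert u X. \<tau> x = c}"
                show "x \<in> {x\<in>X. \<sigma> x = c}"
                proof (cases "x = u \<or> x \<in> X1 - {y}")
                  case True then show ?thesis using x X1X False by (auto simp: \<tau>_def)
                next
                  case F2: False
                  then have "x \<in> insert y X'" using x unfolding X'_def by auto
                  then have "\<tau> x \<in> C'" using s1 F2 by (auto simp: \<tau>_def)
                  then show ?thesis using x \<open>c \<in> C0\<close> unfolding C'_def by auto
                qed
              qed
              have "card {x \<in> insert u X. \<tau> x = c} \<le> card {x\<in>X. \<sigma> x = c}"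
                by (rule card_mono) (use fX sub in auto)
              then show ?thesis using cap c by auto
            qed
          next
            case False
            have sub: "{x \<in> insert u X. \<tau> x = c} \<subseteq> {x\<in>insert y X'. \<sigma>' x = c}"
            proof
              fix x assume x: "x \<in> {x \<in> insert u X. \<tau> x = c}"
              show "x \<in> {x\<in>insert y X'. \<sigma>' x = c}"
              proof (cases "x = u \<or> x \<in> X1 - {y}")
                case True
                have "\<tau> x \<in> C0" using True yC0 unfolding \<tau>_def X1_def by auto
                then show ?thesis using x False by auto
              next
                case F2: False
                then show ?thesis using x unfolding X'_def by (auto simp: \<tau>_def)
              qed
            qed
            have "card {x \<in> insert u X. \<tau> x = c} \<le> card {x\<in>insert y X'. \<sigma>' x = c}"
              by (rule card_mono) (use fX sub in \<open>auto simp: X'_def\<close>)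
            also have "\<dots> \<le> k c" using s2 c False unfolding C'_def by auto
            finally show ?thesis .
          qed
        qed
        then show False using nm u by auto
      qed
    qed
    then obtain Z' where Z': "X1 \<subseteq> Z'" "Z' \<subseteq> X' \<union> X1" "rho C' A k Z' \<le> card (X' \<inter> Z')" by blast
    define Z where "Z = U \<union> Z'"
    have "rho C A k Z \<le> (\<Sum>c\<in>C0 \<union> {c\<in>C'. A c \<inter> Z' \<noteq> {}}. k c)"
      unfolding rho_def
      by (rule sum_mono2) (use fC in \<open>auto simp: C0_def C'_def Z_def\<close>)
    also have "\<dots> = (\<Sum>c\<in>C0. k c) + rho C' A k Z'"
      unfolding rho_def
      by (rule sum.union_disjoint) (use fC in \<open>auto simp: C0_def C'_def\<close>)
    also have "\<dots> \<le> card X1 + card (X' \<inter> Z')" using cardX1 Z' by simp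
    also have "\<dots> = card (X \<inter> Z)"
    proof -
      have e: "X \<inter> Z = X1 \<union> (X' \<inter> Z')" using Z' disj X1X unfolding Z_def X'_def by auto
      show ?thesis unfolding e
        by (rule card_Un_disjoint[symmetric]) (use fX X1X in \<open>auto simp: X'_def intro: finite_subset\<close>)
    qed
    finally show ?thesis using Z' X1X unfolding Z_def X'_def by (intro exI[of _ Z]) (auto simp: Z_def)
  qed
qed

lemma aug:
  assumes fT: "finite T" and fC: "finite C" and XT: "X \<subseteq> T" and mX: "matchable C A k X"
    and nm: "\<forall>y\<in>T - X. \<not> matchable C A k (insert y X)"
    and f01: "\<forall>w\<in>T. 0 \<le> f w \<and> f w \<le> 1"
    and comp: "\<forall>W. W \<subseteq> T \<longrightarrow> sum f W \<le> real (rho C A k W)"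
  shows "sum f T \<le> real (card X)"
proof -
  obtain \<sigma> where s1: "\<forall>x\<in>X. \<sigma> x \<in> C \<and> x \<in> A (\<sigma> x)"
    and s2: "\<forall>c\<in>C. card {x\<in>X. \<sigma> x = c} \<le> k c" using mX unfolding matchable_def by blast
  have fX: "finite X" using fT XT finite_subset by blast
  obtain Z where Z: "T - X \<subseteq> Z" "Z \<subseteq> X \<union> (T - X)" "rho C A k Z \<le> card (X \<inter> Z)"
    using hall_aux[OF fX fC _ s1 s2, of "T - X"] nm by auto
  have ZT: "Z \<subseteq> T" using Z XT by auto
  have "sum f T = sum f Z + sum f (T - Z)"
    using sum.subset_diff[OF ZT fT] by (simp add: add.commute)
  also have "sum f Z \<le> real (card (X \<inter> Z))"
  proof -
    have "sum f Z \<le> real (rho C A k Z)" using comp ZT by auto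
    also have "\<dots> \<le> real (card (X \<inter> Z))" using Z(3) by simp
    finally show ?thesis .
  qed
  also have "sum f (T - Z) \<le> real (card (T - Z))"
  proof -
    have "sum f (T - Z) \<le> sum (\<lambda>_. 1::real) (T - Z)"
      by (rule sum_mono) (use f01 in auto)
    then show ?thesis by simp
  qed
  also have "card (T - Z) \<le> card (X - Z)"
    by (rule card_mono) (use fX Z in auto)
  also have "real (card (X \<inter> Z)) + real (card (X - Z)) = real (card X)"
    using card_Int_Diff[OF fX, of Z] by simp
  finally show ?thesis by simp
qed

lemma matchable_empty: "matchable C A k {}"
  unfolding matchable_def by simp

lemma matchable_subset: "matchable C A k X \<Longrightarrow> Y \<subseteq> X \<Longrightarrow> finite X \<Longrightarrow> matchable C A k Y"
  unfolding matchable_def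
proof (elim exE conjE, intro exI conjI ballI)
  fix \<sigma> x c
  assume a: "\<forall>x\<in>X. \<sigma> x \<in> C \<and> x \<in> A (\<sigma> x)" "\<forall>c\<in>C. card {x \<in> X. \<sigma> x = c} \<le> k c"
    "Y \<subseteq> X" "finite X"
  { assume "x \<in> Y" then show "\<sigma> x \<in> C" "x \<in> A (\<sigma> x)" using a by auto }
  { assume c: "c \<in> C"
    have "card {x \<in> Y. \<sigma> x = c} \<le> card {x \<in> X. \<sigma> x = c}"
      by (rule card_mono) (use a in auto)
    then show "card {x \<in> Y. \<sigma> x = c} \<le> k c" using a c by auto }
qed

lemma weighted_inner:
  assumes fO: "finite Om" and fC: "finite C"
    and f01: "\<forall>w\<in>Om. 0 \<le> f w \<and> f w \<le> 1"
    and comp: "\<forall>W. W \<subseteq> Om \<longrightarrow> sum f W \<le> real (rho C A k W)"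
    and wt0: "\<forall>w\<in>Om. 0 \<le> wt w"
  shows "T \<subseteq> Om \<Longrightarrow> \<exists>X\<subseteq>T. matchable C A k X \<and> sum f T \<le> real (card X) \<and>
      (\<forall>a. 0 \<le> a \<longrightarrow> (\<forall>t\<in>T. a \<le> wt t) \<longrightarrow>
         a * (real (card X) - sum f T) \<le> sum wt X - (\<Sum>t\<in>T. f t * wt t))"
proof (induction "card T" arbitrary: T rule: less_induct)
  case less
  have fT: "finite T" using less.prems fO finite_subset by blast
  show ?case
  proof (cases "T = {}")
    case True
    then show ?thesis by (intro exI[of _ "{}"]) (simp add: matchable_empty)
  next
    case False
    have "Min (wt ` T) \<in> wt ` T" using fT False by simp
    then obtain m where m1: "m \<in> T" "wt m = Min (wt ` T)" by auto
    have m: "m \<in> T" "\<forall>t\<in>T. wt m \<le> wt t" using m1 fT by auto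
    define T' where "T' = T - {m}"
    have lt: "card T' < card T" unfolding T'_def using fT m(1) by (metis card_Diff1_less)
    have T'O: "T' \<subseteq> Om" using less.prems unfolding T'_def by auto
    obtain X' where X': "X' \<subseteq> T'" "matchable C A k X'" "sum f T' \<le> real (card X')"
      "\<forall>a. 0 \<le> a \<longrightarrow> (\<forall>t\<in>T'. a \<le> wt t) \<longrightarrow>
         a * (real (card X') - sum f T') \<le> sum wt X' - (\<Sum>t\<in>T'. f t * wt t)"
      using less.hyps[OF lt T'O] by blast
    have fX': "finite X'" using X'(1) fT T'_def finite_subset by blast
    have wm0: "0 \<le> wt m" using wt0 m less.prems by auto
    have E': "wt m * (real (card X') - sum f T') \<le> sum wt X' - (\<Sum>t\<in>T'. f t * wt t)"
      using X'(4) wm0 m(2) unfolding T'_def by auto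
    have sT: "sum f T = sum f T' + f m" unfolding T'_def using fT m(1)
      by (simp add: sum.remove)
    have sT2: "(\<Sum>t\<in>T. f t * wt t) = (\<Sum>t\<in>T'. f t * wt t) + f m * wt m" unfolding T'_def using fT m(1)
      by (simp add: sum.remove)
    have fm: "0 \<le> f m" "f m \<le> 1" using f01 m less.prems by auto
    show ?thesis
    proof (cases "sum f T \<le> real (card X')")
      case True
      show ?thesis
      proof (intro exI[of _ X'] conjI allI impI)
        show "X' \<subseteq> T" using X' T'_def by auto
        show "matchable C A k X'" by fact
        show "sum f T \<le> real (card X')" by fact
        fix a assume a: "0 \<le> a" "\<forall>t\<in>T. a \<le> wt t"
        have "a \<le> wt m" using a m by auto
        have d: "0 \<le> real (card X') - sum f T" using True by simp
        have "a * (real (card X') - sum f T) \<le> wt m * (real (card X') - sum f T)"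
          by (rule mult_right_mono) (use a m d in auto)
        also have "\<dots> = wt m * (real (card X') - sum f T') - f m * wt m" using sT by (simp add: algebra_simps)
        also have "\<dots> \<le> sum wt X' - (\<Sum>t\<in>T. f t * wt t)" using E' sT2 by simp
        finally show "a * (real (card X') - sum f T) \<le> sum wt X' - (\<Sum>t\<in>T. f t * wt t)" .
      qed
    next
      case False
      have "\<exists>y\<in>T - X'. matchable C A k (insert y X')"
      proof (rule ccontr)
        assume "\<not> ?thesis"
        moreover have "X' \<subseteq> T" using X'(1) unfolding T'_def by auto
        moreover have "\<forall>w\<in>T. 0 \<le> f w \<and> f w \<le> 1" using f01 less.prems by auto
        moreover have "\<forall>W. W \<subseteq> T \<longrightarrow> sum f W \<le> real (rho C A k W)" using comp less.prems by auto
        ultimately have "sum f T \<le> real (card X')"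
          using aug[OF fT fC _ X'(2), of f] by blast
        then show False using False by simp
      qed
      then obtain y where y: "y \<in> T" "y \<notin> X'" "matchable C A k (insert y X')" by blast
      define X where "X = insert y X'"
      have cX: "card X = card X' + 1" unfolding X_def using fX' y by simp
      have wX: "sum wt X = sum wt X' + wt y" unfolding X_def using fX' y by simp
      have wy: "wt m \<le> wt y" using m y by auto
      show ?thesis
      proof (intro exI[of _ X] conjI allI impI)
        show "X \<subseteq> T" using X' y T'_def X_def by auto
        show "matchable C A k X" using y X_def by simp
        show "sum f T \<le> real (card X)" using cX sT X'(3) fm by simp
        fix a assume a: "0 \<le> a" "\<forall>t\<in>T. a \<le> wt t"
        have d: "0 \<le> real (card X) - sum f T" using cX sT X'(3) fm by simp
        have "a * (real (card X) - sum f T) \<le> wt m * (real (card X) - sum f T)"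
          by (rule mult_right_mono) (use a m d in auto)
        also have "\<dots> = wt m * (real (card X') - sum f T') + wt m - f m * wt m" using sT cX by (simp add: algebra_simps)
        also have "\<dots> \<le> sum wt X - (\<Sum>t\<in>T. f t * wt t)" using E' sT2 wX wy by simp
        finally show "a * (real (card X) - sum f T) \<le> sum wt X - (\<Sum>t\<in>T. f t * wt t)" .
      qed
    qed
  qed
qed

lemma weighted:
  assumes fO: "finite Om" and fC: "finite C"
    and f01: "\<forall>w\<in>Om. 0 \<le> f w \<and> f w \<le> 1"
    and comp: "\<forall>W. W \<subseteq> Om \<longrightarrow> sum f W \<le> real (rho C A k W)"
    and wt0: "\<forall>w\<in>Om. 0 \<le> wt w"
  shows "\<exists>X\<subseteq>Om. matchable C A k X \<and> (\<Sum>t\<in>Om. f t * wt t) \<le> sum wt X"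
proof -
  obtain X where "X \<subseteq> Om" "matchable C A k X"
    "\<forall>a. 0 \<le> a \<longrightarrow> (\<forall>t\<in>Om. a \<le> wt t) \<longrightarrow>
         a * (real (card X) - sum f Om) \<le> sum wt X - (\<Sum>t\<in>Om. f t * wt t)"
    using weighted_inner[OF assms order_refl] by blast
  then show ?thesis using wt0 by (intro exI[of _ X]) force
qed

lemma cell_eq:
  assumes "partition_on Om Q" "c \<in> Q" "w \<in> c"
  shows "cell Q w = c"
  unfolding cell_def
proof (rule the_equality)
  show "c \<in> Q \<and> w \<in> c" using assms by auto
  fix c' assume "c' \<in> Q \<and> w \<in> c'"
  then show "c' = c" using partition_onD2[OF assms(1)] assms
    by (meson disjointD disjoint_iff)
qed

lemma cell_in:
  assumes "partition_on Om Q" "w \<in> Om"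
  shows "cell Q w \<in> Q \<and> w \<in> cell Q w"
proof -
  obtain c where "c \<in> Q" "w \<in> c" using partition_onD1[OF assms(1)] assms(2) by auto
  then show ?thesis using cell_eq[OF assms(1)] by auto
qed

lemma rho_game:
  assumes "finite N" "\<forall>i\<in>N. finite (P i)"
  shows "real (rho (Sigma N P) snd (\<lambda>p. K (fst p)) W) =
    (\<Sum>i\<in>N. real (K i) * real (card {c\<in>P i. c \<inter> W \<noteq> {}}))"
proof -
  have e: "{p\<in>Sigma N P. snd p \<inter> W \<noteq> {}} = Sigma N (\<lambda>i. {c\<in>P i. c \<inter> W \<noteq> {}})" by auto
  have "rho (Sigma N P) snd (\<lambda>p. K (fst p)) W = (\<Sum>i\<in>N. \<Sum>c\<in>{c\<in>P i. c \<inter> W \<noteq> {}}. K i)"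
    unfolding rho_def e
    using sum.Sigma[of N "\<lambda>i. {c\<in>P i. c \<inter> W \<noteq> {}}" "\<lambda>i c. K i"] assms by (simp add: split_def)
  also have "\<dots> = (\<Sum>i\<in>N. K i * card {c\<in>P i. c \<inter> W \<noteq> {}})" by (simp add: mult.commute)
  finally show ?thesis by simp
qed

lemma game_facts:
  assumes "search_game N Omega P K mu v"
  shows "finite N" "finite Omega" "\<forall>i\<in>N. partition_on Omega (P i)"
    "\<forall>i\<in>N. finite (P i)" "\<forall>i\<in>N. \<forall>c\<in>P i. c \<subseteq> Omega \<and> finite c"
    "\<forall>w\<in>Omega. 0 \<le> mu w * v w"
proof -
  show "finite N" "finite Omega" "\<forall>i\<in>N. partition_on Omega (P i)"
    using assms unfolding search_game_def by auto
  then show "\<forall>i\<in>N. finite (P i)" using finite_elements by blast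
  show "\<forall>i\<in>N. \<forall>c\<in>P i. c \<subseteq> Omega \<and> finite c"
  proof (intro ballI)
    fix i c assume i: "i \<in> N" and c: "c \<in> P i"
    have "c \<subseteq> Omega" using partition_onD1[of Omega "P i"] \<open>\<forall>i\<in>N. partition_on Omega (P i)\<close> i c by auto
    then show "c \<subseteq> Omega \<and> finite c" using \<open>finite Omega\<close> finite_subset by blast
  qed
  show "\<forall>w\<in>Omega. 0 \<le> mu w * v w" using assms unfolding search_game_def by auto
qed

lemma payoff_eq:
  assumes "finite Omega"
  shows "social_payoff N Omega P mu v s = sum (\<lambda>w. mu w * v w) {w\<in>Omega. 1 \<le> m_s N P s w}"
  unfolding social_payoff_def using assms by (simp add: sum.inter_filter if_distrib cong: if_cong)

lemma payoff_ge:
  assumes g: "search_game N Omega P K mu v"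
    and m: "matchable (Sigma N P) snd (\<lambda>p. K (fst p)) X" and XO: "X \<subseteq> Omega"
  shows "\<exists>s. pure_profile N P K s \<and> sum (\<lambda>w. mu w * v w) X \<le> social_payoff N Omega P mu v s"
proof -
  note gf = game_facts[OF g]
  obtain \<sigma> where s1: "\<forall>x\<in>X. \<sigma> x \<in> Sigma N P \<and> x \<in> snd (\<sigma> x)"
    and s2: "\<forall>p\<in>Sigma N P. card {x\<in>X. \<sigma> x = p} \<le> K (fst p)"
    using m unfolding matchable_def by blast
  define s where "s i c = {x\<in>X. \<sigma> x = (i, c)}" for i c
  have pp: "pure_profile N P K s"
    unfolding pure_profile_def
  proof (intro ballI conjI)
    fix i c assume i: "i \<in> N" and c: "c \<in> P i"
    show "s i c \<subseteq> c" using s1 unfolding s_def by fastforce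
    show "card (s i c) \<le> K i" using s2 i c unfolding s_def by fastforce
  qed
  have cov: "1 \<le> m_s N P s w" if w: "w \<in> X" for w
  proof -
    obtain i c where ic: "\<sigma> w = (i, c)" "i \<in> N" "c \<in> P i" "w \<in> c" using s1 w by force
    have pi: "partition_on Omega (P i)" using gf(3) ic(2) by auto
    have "cell (P i) w = c" using cell_eq[OF pi ic(3) ic(4)] .
    then have "i \<in> {i\<in>N. w \<in> s i (cell (P i) w)}" using ic w unfolding s_def by auto
    then have "card {i\<in>N. w \<in> s i (cell (P i) w)} \<noteq> 0" using gf(1) by auto
    then show ?thesis unfolding m_s_def by simp
  qed
  have "sum (\<lambda>w. mu w * v w) X \<le> sum (\<lambda>w. mu w * v w) {w\<in>Omega. 1 \<le> m_s N P s w}"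
    by (rule sum_mono2) (use gf(2) XO cov gf(6) in auto)
  then show ?thesis using pp payoff_eq[OF gf(2), of N P mu v s] by (intro exI[of _ s]) simp
qed

lemma payoffs_finite:
  assumes "search_game N Omega P K mu v"
  shows "finite {social_payoff N Omega P mu v s | s. pure_profile N P K s}"
    "{social_payoff N Omega P mu v s | s. pure_profile N P K s} \<noteq> {}"
proof -
  note gf = game_facts[OF assms]
  have "{social_payoff N Omega P mu v s | s. pure_profile N P K s} \<subseteq>
     (\<lambda>S. sum (\<lambda>w. mu w * v w) S) ` Pow Omega"
  proof (rule subsetI)
    fix x assume "x \<in> {social_payoff N Omega P mu v s | s. pure_profile N P K s}"
    then obtain s where "x = social_payoff N Omega P mu v s" by blast
    then show "x \<in> (\<lambda>S. sum (\<lambda>w. mu w * v w) S) ` Pow Omega"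
      using payoff_eq[OF gf(2), of N P mu v s]
      by (intro image_eqI[of _ _ "{w\<in>Omega. 1 \<le> m_s N P s w}"]) auto
  qed
  then show "finite {social_payoff N Omega P mu v s | s. pure_profile N P K s}"
    using gf(2) by (meson finite_Pow_iff finite_imageI finite_subset)
  have "pure_profile N P K (\<lambda>i c. {})" unfolding pure_profile_def by simp
  then show "{social_payoff N Omega P mu v s | s. pure_profile N P K s} \<noteq> {}" by blast
qed

lemma profile_FF:
  assumes g: "search_game N Omega P K mu v" and pp: "pure_profile N P K s"
  shows "\<exists>f\<in>F_F N P K. outcome_value Omega mu v f = social_payoff N Omega P mu v s"
proof -
  note gf = game_facts[OF g]
  define \<alpha> where "\<alpha> i c w = (if w \<in> s i c then 1 else (0::real))" for i c w
  have fa: "frac_alloc N P K \<alpha>"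
    unfolding frac_alloc_def
  proof (intro ballI, rule conjI)
    fix i c assume i: "i \<in> N" and c: "c \<in> P i"
    show "\<forall>w\<in>c. 0 \<le> \<alpha> i c w" unfolding \<alpha>_def by auto
    have fc: "finite c" using gf(5) i c by auto
    have sub: "s i c \<subseteq> c" using pp i c unfolding pure_profile_def by auto
    have "(\<Sum>w\<in>c. \<alpha> i c w) = real (card {w\<in>c. w \<in> s i c})"
      unfolding \<alpha>_def using fc by (simp add: sum.inter_filter[symmetric])
    also have "{w\<in>c. w \<in> s i c} = s i c" using sub by auto
    finally show "(\<Sum>w\<in>c. \<alpha> i c w) \<le> real (K i)" using pp i c unfolding pure_profile_def by auto
  qed
  have fe: "f_alpha N P \<alpha> w = (if 1 \<le> m_s N P s w then 1 else 0)" for w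
  proof -
    have "(\<Sum>i\<in>N. \<alpha> i (cell (P i) w) w) = real (m_s N P s w)"
      unfolding \<alpha>_def m_s_def using gf(1) by (simp add: sum.inter_filter[symmetric])
    then show ?thesis unfolding f_alpha_def by auto
  qed
  have "outcome_value Omega mu v (f_alpha N P \<alpha>) = social_payoff N Omega P mu v s"
    unfolding outcome_value_def social_payoff_def fe by (rule sum.cong[OF refl]) auto
  moreover have "f_alpha N P \<alpha> \<in> F_F N P K" unfolding F_F_def using fa by blast
  ultimately show ?thesis by blast
qed

lemma FF_sub_FC:
  assumes g: "search_game N Omega P K mu v"
  shows "F_F N P K \<subseteq> F_C N Omega P K"
proof
  note gf = game_facts[OF g]
  fix f assume "f \<in> F_F N P K"
  then obtain \<alpha> where fa: "frac_alloc N P K \<alpha>" and f: "f = f_alpha N P \<alpha>" unfolding F_F_def by blast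
  have nn: "0 \<le> \<alpha> i (cell (P i) w) w" if "i \<in> N" "w \<in> Omega" for i w
  proof -
    have ci: "cell (P i) w \<in> P i" "w \<in> cell (P i) w" using cell_in[of Omega "P i" w] gf(3) that by auto
    have "(\<forall>w'\<in>cell (P i) w. 0 \<le> \<alpha> i (cell (P i) w) w') \<and> (\<Sum>w'\<in>cell (P i) w. \<alpha> i (cell (P i) w) w') \<le> real (K i)"
      using bspec[OF bspec[OF fa[unfolded frac_alloc_def] that(1)] ci(1)] .
    then have "\<forall>w'\<in>cell (P i) w. 0 \<le> \<alpha> i (cell (P i) w) w'" by (rule conjunct1)
    then show ?thesis using ci(2) by blast
  qed
  have mo: "mixed_outcome Omega f"
    unfolding mixed_outcome_def f f_alpha_def using nn by (auto intro: sum_nonneg)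
  have bound: "sum f W \<le> (\<Sum>i\<in>N. real (K i) * real (card {c\<in>P i. c \<inter> W \<noteq> {}}))"
    if W: "W \<subseteq> Omega" for W
  proof -
    have fW: "finite W" using W gf(2) finite_subset by blast
    have "sum f W \<le> (\<Sum>w\<in>W. \<Sum>i\<in>N. \<alpha> i (cell (P i) w) w)"
      by (rule sum_mono) (simp add: f f_alpha_def)
    also have "\<dots> = (\<Sum>i\<in>N. \<Sum>w\<in>W. \<alpha> i (cell (P i) w) w)" by (rule sum.swap)
    also have "\<dots> \<le> (\<Sum>i\<in>N. real (K i) * real (card {c\<in>P i. c \<inter> W \<noteq> {}}))"
    proof (rule sum_mono)
      fix i assume i: "i \<in> N"
      define Ci where "Ci = {c\<in>P i. c \<inter> W \<noteq> {}}"
      have fCi: "finite Ci" using gf(4) i unfolding Ci_def by auto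
      have pi: "partition_on Omega (P i)" using gf(3) i by auto
      have img: "cell (P i) ` W \<subseteq> Ci"
        using cell_in[OF pi] W unfolding Ci_def by auto
      have "(\<Sum>w\<in>W. \<alpha> i (cell (P i) w) w) = (\<Sum>c\<in>Ci. \<Sum>w\<in>{w\<in>W. cell (P i) w = c}. \<alpha> i (cell (P i) w) w)"
        by (rule sum.group[OF fW fCi img, symmetric])
      also have "\<dots> = (\<Sum>c\<in>Ci. \<Sum>w\<in>c \<inter> W. \<alpha> i c w)"
      proof (rule sum.cong[OF refl])
        fix c assume c: "c \<in> Ci"
        have e: "{w\<in>W. cell (P i) w = c} = c \<inter> W"
          using c cell_eq[OF pi] cell_in[OF pi] W unfolding Ci_def by auto
        show "(\<Sum>w\<in>{w\<in>W. cell (P i) w = c}. \<alpha> i (cell (P i) w) w) = (\<Sum>w\<in>c \<inter> W. \<alpha> i c w)"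
          unfolding e by (rule sum.cong[OF refl]) (use c cell_eq[OF pi] in \<open>auto simp: Ci_def\<close>)
      qed
      also have "\<dots> \<le> (\<Sum>c\<in>Ci. real (K i))"
      proof (rule sum_mono)
        fix c assume c: "c \<in> Ci"
        have cP: "c \<in> P i" "finite c" using c gf(5) i unfolding Ci_def by auto
        have "(\<Sum>w\<in>c \<inter> W. \<alpha> i c w) \<le> (\<Sum>w\<in>c. \<alpha> i c w)"
          by (rule sum_mono2) (use cP fa i in \<open>auto simp: frac_alloc_def\<close>)
        also have "\<dots> \<le> real (K i)" using fa i cP unfolding frac_alloc_def by auto
        finally show "(\<Sum>w\<in>c \<inter> W. \<alpha> i c w) \<le> real (K i)" .
      qed
      also have "\<dots> = real (K i) * real (card Ci)" by simp
      finally show "(\<Sum>w\<in>W. \<alpha> i (cell (P i) w) w) \<le> real (K i) * real (card {c\<in>P i. c \<inter> W \<noteq> {}})"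
        unfolding Ci_def .
    qed
    finally show ?thesis .
  qed
  show "f \<in> F_C N Omega P K" unfolding F_C_def compatible_def using mo bound by blast
qed

lemma FC_bound:
  assumes g: "search_game N Omega P K mu v" and f: "f \<in> F_C N Omega P K"
  shows "outcome_value Omega mu v f \<le> U_opt N Omega P K mu v"
proof -
  note gf = game_facts[OF g]
  have fC: "finite (Sigma N P)" using gf(1,4) by auto
  have f01: "\<forall>w\<in>Omega. 0 \<le> f w \<and> f w \<le> 1" using f unfolding F_C_def compatible_def mixed_outcome_def by auto
  have comp: "\<forall>W. W \<subseteq> Omega \<longrightarrow> sum f W \<le> real (rho (Sigma N P) snd (\<lambda>p. K (fst p)) W)"
    using f rho_game[OF gf(1) gf(4)] unfolding F_C_def compatible_def by auto
  obtain X where X: "X \<subseteq> Omega" "matchable (Sigma N P) snd (\<lambda>p. K (fst p)) X"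
    "(\<Sum>t\<in>Omega. f t * (mu t * v t)) \<le> sum (\<lambda>w. mu w * v w) X"
    using weighted[OF gf(2) fC f01 comp gf(6)] by blast
  obtain s where s: "pure_profile N P K s" "sum (\<lambda>w. mu w * v w) X \<le> social_payoff N Omega P mu v s"
    using payoff_ge[OF g X(2) X(1)] by blast
  have "social_payoff N Omega P mu v s \<le> U_opt N Omega P K mu v"
    unfolding U_opt_def using payoffs_finite[OF g] s(1) by (intro Max_ge) auto
  moreover have "outcome_value Omega mu v f = (\<Sum>t\<in>Omega. f t * (mu t * v t))"
    unfolding outcome_value_def by (simp add: mult.assoc)
  ultimately show ?thesis using X(3) s(2) by linarith
qed

theorem corollary3:
  fixes N :: "'i set" and Omega :: "'w set" and P :: "'i \<Rightarrow> 'w set set"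
    and K :: "'i \<Rightarrow> nat" and mu v :: "'w \<Rightarrow> real"
  assumes "search_game N Omega P K mu v"
  shows "is_max_over (F_C N Omega P K) (outcome_value Omega mu v) (U_opt N Omega P K mu v)
       \<and> is_max_over (F_F N P K) (outcome_value Omega mu v) (U_opt N Omega P K mu v)"
proof -
  have "U_opt N Omega P K mu v \<in> {social_payoff N Omega P mu v s | s. pure_profile N P K s}"
    unfolding U_opt_def using payoffs_finite[OF assms] by (rule Max_in)
  then obtain s where s: "pure_profile N P K s" "social_payoff N Omega P mu v s = U_opt N Omega P K mu v"
    by auto
  obtain f where f: "f \<in> F_F N P K" "outcome_value Omega mu v f = U_opt N Omega P K mu v"
    using profile_FF[OF assms s(1)] s(2) by auto
  have fc: "f \<in> F_C N Omega P K" using f(1) FF_sub_FC[OF assms] by blast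
  show ?thesis unfolding is_max_over_def
  proof (intro conjI)
    show "\<exists>a\<in>F_C N Omega P K. outcome_value Omega mu v a = U_opt N Omega P K mu v" using fc f(2) by blast
    show "\<forall>a\<in>F_C N Omega P K. outcome_value Omega mu v a \<le> U_opt N Omega P K mu v"
      using FC_bound[OF assms] by blast
    show "\<exists>a\<in>F_F N P K. outcome_value Omega mu v a = U_opt N Omega P K mu v" using f by blast
    show "\<forall>a\<in>F_F N P K. outcome_value Omega mu v a \<le> U_opt N Omega P K mu v"
      using FC_bound[OF assms] FF_sub_FC[OF assms] by blast
  qed
qed

end
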